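(* Let $\Gamma$ be a weighted digraph with vertex set $\{1,\dots,n\}$, $n>1$, without loops and with strictly positive arc weights, with Laplacian matrix $L$ and in-forest dimension $d$. Then $$Q=\sum_{k=0}^{n-d}s_{n-d-k}(-L)^k=\operatorname{adj}(I+L),$$ and for every $\tau\in\mathbb R$, $$Q(\tau)=\sum_{k=0}^{n-d}s_{n-d-k}(\tau)(-\tau L)^k=\operatorname{adj}(I+\tau L).$$
   Context: $W=(w_{ij})$ is the matrix of arc weights ($w_{ij}>0$ iff there is an arc $i\to j$, else $0$). The Laplacian $L=(\ell_{ij})$: $\ell_{ij}=-w_{ij}$ for $j\ne i$, $\ell_{ii}=\sum_{k\ne i}w_{ik}$. The weight of a subgraph is the product of its arc weights (1 if no arcs); the weight of a set of subgraphs is the sum of their weights. A converging tree is a weakly connected digraph with one vertex (the root) of outdegree 0 and all others of outdegree 1; an in-forest is a spanning subgraph of $\Gamma$ whose weak components are converging trees. The in-forest dimension $d$ is the minimal number of trees in an in-forest (so in-forests have at most $n-d$ arcs). $\sigma_k$ is the total weight of in-forests with $k$ arcs; $Q_k=(q^k_{ij})$ with $q^k_{ij}$ the total weight of in-forests with $k$ arcs in which $i$ lies in a tree rooted at $j$. $Q=\sum_{k=0}^{n-d}Q_k$, $Q(\tau)=\sum_{k=0}^{n-d}Q_k\tau^k$, $s_k=\sum_{j=0}^k\sigma_j$, $s_k(\tau)=\sum_{j=0}^k\sigma_j\tau^j$. $\operatorname{adj}A$ is the transposed matrix of cofactors. *)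

theory Defs
  imports "Jordan_Normal_Form.Determinant"
begin

(* Vertices are 0..<n (the paper's 1..n shifted by one).
   W is the n x n weight matrix: W $$ (i,j) > 0 iff there is an arc i -> j. *)

definition arcs :: "nat \<Rightarrow> real mat \<Rightarrow> (nat \<times> nat) set" where
  "arcs n W = {(i,j). i < n \<and> j < n \<and> W $$ (i,j) \<noteq> 0}"

definition laplacian :: "nat \<Rightarrow> real mat \<Rightarrow> real mat" where
  "laplacian n W = mat n n (\<lambda>(i,j). if i = j then (\<Sum>k\<in>{0..<n} - {i}. W $$ (i,k)) else - W $$ (i,j))"

definition outdeg :: "(nat \<times> nat) set \<Rightarrow> nat \<Rightarrow> nat" where
  "outdeg F i = card {j. (i,j) \<in> F}"

definition weak_conn :: "(nat \<times> nat) set \<Rightarrow> nat \<Rightarrow> nat \<Rightarrow> bool" where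
  "weak_conn F i j \<longleftrightarrow> (i,j) \<in> (F \<union> F\<inverse>)\<^sup>*"

(* spanning subgraph of Gamma whose weak components are converging trees:
   every vertex has outdegree 0 or 1, and every weak component contains
   exactly one vertex of outdegree 0 (its root) *)
definition is_in_forest :: "nat \<Rightarrow> real mat \<Rightarrow> (nat \<times> nat) set \<Rightarrow> bool" where
  "is_in_forest n W F \<longleftrightarrow> F \<subseteq> arcs n W \<and> (\<forall>i<n. outdeg F i \<le> 1) \<and>
     (\<forall>i<n. \<exists>!r. r < n \<and> weak_conn F i r \<and> outdeg F r = 0)"

definition in_forests :: "nat \<Rightarrow> real mat \<Rightarrow> (nat \<times> nat) set set" where
  "in_forests n W = {F. is_in_forest n W F}"

definition sg_weight :: "real mat \<Rightarrow> (nat \<times> nat) set \<Rightarrow> real" where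
  "sg_weight W F = (\<Prod>(i,j)\<in>F. W $$ (i,j))"

definition num_trees :: "nat \<Rightarrow> (nat \<times> nat) set \<Rightarrow> nat" where
  "num_trees n F = card {r. r < n \<and> outdeg F r = 0}"

definition forest_dim :: "nat \<Rightarrow> real mat \<Rightarrow> nat" where
  "forest_dim n W = Min (num_trees n ` in_forests n W)"

definition sigma :: "nat \<Rightarrow> real mat \<Rightarrow> nat \<Rightarrow> real" where
  "sigma n W k = (\<Sum>F\<in>{F \<in> in_forests n W. card F = k}. sg_weight W F)"

definition Qk :: "nat \<Rightarrow> real mat \<Rightarrow> nat \<Rightarrow> real mat" where
  "Qk n W k = mat n n (\<lambda>(i,j).
     \<Sum>F\<in>{F \<in> in_forests n W. card F = k \<and> weak_conn F i j \<and> outdeg F j = 0}. sg_weight W F)"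

definition mat_sum :: "nat \<Rightarrow> ('k \<Rightarrow> real mat) \<Rightarrow> 'k set \<Rightarrow> real mat" where
  "mat_sum n f K = mat n n (\<lambda>(i,j). \<Sum>k\<in>K. f k $$ (i,j))"

definition Qtot :: "nat \<Rightarrow> real mat \<Rightarrow> real mat" where
  "Qtot n W = mat_sum n (Qk n W) {0..n - forest_dim n W}"

definition Qtau :: "nat \<Rightarrow> real mat \<Rightarrow> real \<Rightarrow> real mat" where
  "Qtau n W \<tau> = mat_sum n (\<lambda>k. \<tau> ^ k \<cdot>\<^sub>m Qk n W k) {0..n - forest_dim n W}"

definition s_sum :: "nat \<Rightarrow> real mat \<Rightarrow> nat \<Rightarrow> real" where
  "s_sum n W k = (\<Sum>j=0..k. sigma n W j)"

definition s_tau :: "nat \<Rightarrow> real mat \<Rightarrow> nat \<Rightarrow> real \<Rightarrow> real" where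
  "s_tau n W k \<tau> = (\<Sum>j=0..k. sigma n W j * \<tau> ^ j)"

end

theory Submission
  imports Defs
begin



lemma det_expand:
  fixes A :: "'a::comm_ring_1 mat"
  assumes A: "A \<in> carrier_mat n n" and fin: "\<And>i. i < n \<Longrightarrow> finite (C i)"
   and ent: "\<And>i k. i<n \<Longrightarrow> k<n \<Longrightarrow> A $$ (i,k) = (\<Sum>c\<in>C i. a i c * v i c k)"
  shows "det A = (\<Sum>f\<in>PiE {0..<n} C. (\<Prod>i=0..<n. a i (f i)) * det (mat n n (\<lambda>(i,k). v i (f i) k)))"
proof -
  let ?P = "{p. p permutes {0..<n}}"
  have "det A = (\<Sum>p\<in>?P. signof p * (\<Prod>i=0..<n. A $$ (i, p i)))" by (rule det_def'[OF A])
  also have "\<dots> = (\<Sum>p\<in>?P. signof p * (\<Sum>f\<in>PiE {0..<n} C. \<Prod>i=0..<n. a i (f i) * v i (f i) (p i)))"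
  proof (rule sum.cong[OF refl])
    fix p assume "p \<in> ?P"
    hence pi: "\<And>i. i < n \<Longrightarrow> p i < n" using permutes_in_image by fastforce
    have "(\<Prod>i=0..<n. A $$ (i, p i)) = (\<Prod>i=0..<n. \<Sum>c\<in>C i. a i c * v i c (p i))"
      by (rule prod.cong, simp, simp add: ent pi)
    also have "\<dots> = (\<Sum>f\<in>PiE {0..<n} C. \<Prod>i=0..<n. a i (f i) * v i (f i) (p i))"
      by (rule prod_sum_PiE, auto simp: fin)
    finally show "signof p * (\<Prod>i=0..<n. A $$ (i, p i)) = signof p * (\<Sum>f\<in>PiE {0..<n} C. \<Prod>i=0..<n. a i (f i) * v i (f i) (p i))" by simp
  qed
  also have "\<dots> = (\<Sum>p\<in>?P. \<Sum>f\<in>PiE {0..<n} C. (\<Prod>i=0..<n. a i (f i)) * (signof p * (\<Prod>i=0..<n. v i (f i) (p i))))"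
    by (simp add: sum_distrib_left prod.distrib ac_simps)
  also have "\<dots> = (\<Sum>f\<in>PiE {0..<n} C. \<Sum>p\<in>?P. (\<Prod>i=0..<n. a i (f i)) * (signof p * (\<Prod>i=0..<n. v i (f i) (p i))))"
    by (rule sum.swap)
  also have "\<dots> = (\<Sum>f\<in>PiE {0..<n} C. (\<Prod>i=0..<n. a i (f i)) * det (mat n n (\<lambda>(i,k). v i (f i) k)))"
  proof (rule sum.cong[OF refl])
    fix f
    have "det (mat n n (\<lambda>(i,k). v i (f i) k)) = (\<Sum>p\<in>?P. signof p * (\<Prod>i=0..<n. mat n n (\<lambda>(i,k). v i (f i) k) $$ (i, p i)))"
      by (rule det_def', simp)
    also have "\<dots> = (\<Sum>p\<in>?P. signof p * (\<Prod>i=0..<n. v i (f i) (p i)))"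
    proof (rule sum.cong[OF refl])
      fix p assume "p \<in> ?P"
      hence pi: "\<And>i. i < n \<Longrightarrow> p i < n" using permutes_in_image by fastforce
      show "signof p * (\<Prod>i=0..<n. mat n n (\<lambda>(i,k). v i (f i) k) $$ (i, p i)) = signof p * (\<Prod>i=0..<n. v i (f i) (p i))"
        by (rule arg_cong[where f="\<lambda>x. signof p * x"], rule prod.cong, simp, simp add: pi)
    qed
    finally show "(\<Sum>p\<in>?P. (\<Prod>i=0..<n. a i (f i)) * (signof p * (\<Prod>i=0..<n. v i (f i) (p i)))) = (\<Prod>i=0..<n. a i (f i)) * det (mat n n (\<lambda>(i,k). v i (f i) k))"
      by (simp add: sum_distrib_left)
  qed
  finally show ?thesis .
qed




definition kd :: "nat \<Rightarrow> nat \<Rightarrow> real" where "kd i k = (if i = k then 1 else 0)"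
definition vv :: "nat \<Rightarrow> nat option \<Rightarrow> nat \<Rightarrow> real" where
  "vv i c k = (case c of None \<Rightarrow> kd i k | Some m \<Rightarrow> kd i k - kd m k)"
definition Dm :: "nat \<Rightarrow> (nat \<Rightarrow> nat option) \<Rightarrow> real mat" where
  "Dm n f = mat n n (\<lambda>(i,k). vv i (f i) k)"
definition rel :: "nat \<Rightarrow> (nat \<Rightarrow> nat option) \<Rightarrow> (nat \<times> nat) set" where
  "rel n f = {(k,m). k<n \<and> f k = Some m}"

lemma sum_kd[simp]: assumes "k < n" shows "(\<Sum>l=0..<n. kd k l * g l) = g k"
  proof -
  have "(\<Sum>l=0..<n. kd k l * g l) = (\<Sum>l=0..<n. if k = l then g l else 0)"
    unfolding kd_def by (rule sum.cong, auto)
  thus ?thesis using assms by (simp add: sum.delta)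
qed

lemma rel_sv: "single_valued (rel n f)"
  unfolding single_valued_def rel_def by auto

lemma rel_finite: assumes "\<forall>k<n. \<forall>m. f k = Some m \<longrightarrow> m<n" shows "finite (rel n f)"
proof -
  have "rel n f \<subseteq> {0..<n} \<times> {0..<n}" using assms unfolding rel_def by auto
  thus ?thesis by (rule finite_subset, simp)
qed

lemma Dm_cyclic:
  assumes rng: "\<forall>k<n. \<forall>m. f k = Some m \<longrightarrow> m<n" and cyc: "(i,i) \<in> (rel n f)\<^sup>+"
  shows "det (Dm n f) = 0"
proof -
  let ?R = "rel n f"
  have "i \<in> Domain ?R" using cyc by (blast elim: converse_tranclE)
  hence i: "i < n" and fi: "f i \<noteq> None" unfolding rel_def by auto
  define u where "u = vec n (\<lambda>x. if (x,i) \<in> ?R\<^sup>* then 1 else (0::real))"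
  have u: "u \<in> carrier_vec n" unfolding u_def by simp
  have un: "u \<noteq> 0\<^sub>v n"
  proof
    assume "u = 0\<^sub>v n"
    hence "u $ i = 0" using i by simp
    thus False unfolding u_def using i by simp
  qed
  have "Dm n f *\<^sub>v u = 0\<^sub>v n"
  proof (rule eq_vecI)
    fix k assume k: "k < dim_vec (0\<^sub>v n :: real vec)"
    hence k: "k < n" by simp
    have row: "(Dm n f *\<^sub>v u) $ k = (\<Sum>l=0..<n. vv k (f k) l * u $ l)"
      unfolding Dm_def mult_mat_vec_def scalar_prod_def using k u by (simp add: u_def)
    show "(Dm n f *\<^sub>v u) $ k = 0\<^sub>v n $ k"
    proof (cases "f k")
      case None
      have "(k,i) \<notin> ?R\<^sup>*"
      proof
        assume "(k,i) \<in> ?R\<^sup>*"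
        moreover have "k \<noteq> i" using None fi by auto
        ultimately obtain z where "(k,z) \<in> ?R" by (meson converse_rtranclE)
        thus False using None unfolding rel_def by auto
      qed
      hence "u $ k = 0" unfolding u_def using k by simp
      thus ?thesis unfolding row using None k by (simp add: vv_def)
    next
      case (Some m)
      have m: "m < n" using rng Some k by auto
      have km: "(k,m) \<in> ?R" using Some k unfolding rel_def by auto
      have "(k,i) \<in> ?R\<^sup>* \<longleftrightarrow> (m,i) \<in> ?R\<^sup>*"
      proof
        assume "(m,i) \<in> ?R\<^sup>*" thus "(k,i) \<in> ?R\<^sup>*" using km by (meson converse_rtrancl_into_rtrancl)
      next
        assume ki: "(k,i) \<in> ?R\<^sup>*"
        show "(m,i) \<in> ?R\<^sup>*"
        proof (cases "k = i")
          case True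
          from cyc obtain w where "(i,w) \<in> ?R" "(w,i) \<in> ?R\<^sup>*" by (meson converse_tranclE r_into_rtrancl trancl_into_rtrancl)
          moreover have "w = m" using rel_sv[of n f] km True calculation(1) unfolding single_valued_def by blast
          ultimately show ?thesis by simp
        next
          case False
          from ki False obtain w where "(k,w) \<in> ?R" "(w,i) \<in> ?R\<^sup>*" by (meson converse_rtranclE)
          moreover have "w = m" using rel_sv[of n f] km calculation(1) unfolding single_valued_def by blast
          ultimately show ?thesis by simp
        qed
      qed
      hence "u $ k = u $ m" unfolding u_def using k m by simp
      thus ?thesis unfolding row using Some k m by (simp add: vv_def left_diff_distrib sum_subtractf)
    qed
  next
    show "dim_vec (Dm n f *\<^sub>v u) = dim_vec (0\<^sub>v n :: real vec)" unfolding Dm_def by simp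
  qed
  moreover have "Dm n f \<in> carrier_mat n n" unfolding Dm_def by simp
  ultimately show ?thesis using det_0_iff_vec_prod_zero u un by blast
qed

lemma sum_kd2[simp]: assumes "x < n" shows "(\<Sum>i<n. kd i x * g i) = g x"
proof -
  have "(\<Sum>i<n. kd i x * g i) = (\<Sum>i<n. if x = i then g i else 0)"
    unfolding kd_def by (rule sum.cong, auto)
  thus ?thesis using assms by (simp add: sum.delta)
qed

lemma Dm_col:
  assumes x: "x < n" and noin: "\<And>y. (y,x) \<notin> rel n g"
  shows "det (Dm n g) = cofactor (Dm n g) x x"
proof -
  have c: "Dm n g \<in> carrier_mat n n" unfolding Dm_def by simp
  have col: "\<And>i. i < n \<Longrightarrow> Dm n g $$ (i,x) = kd i x"
  proof -
    fix i assume i: "i < n"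
    show "Dm n g $$ (i,x) = kd i x"
    proof (cases "g i")
      case None thus ?thesis unfolding Dm_def vv_def using i x by simp
    next
      case (Some m)
      hence "m \<noteq> x" using noin[of i] i unfolding rel_def by auto
      thus ?thesis unfolding Dm_def vv_def using i x Some by (simp add: kd_def)
    qed
  qed
  have "det (Dm n g) = (\<Sum>i<n. Dm n g $$ (i,x) * cofactor (Dm n g) i x)"
    by (rule laplace_expansion_column[OF c x])
  also have "\<dots> = (\<Sum>i<n. kd i x * cofactor (Dm n g) i x)"
    by (rule sum.cong, auto simp: col)
  also have "\<dots> = cofactor (Dm n g) x x" using x by simp
  finally show ?thesis .
qed

lemma Dm_delete_eq:
  assumes "\<And>k. k \<noteq> x \<Longrightarrow> f k = g k"
  shows "mat_delete (Dm n f) x x = mat_delete (Dm n g) x x"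
  unfolding mat_delete_def Dm_def
  by (rule eq_matI, auto simp: assms)

lemma Dm_acyclic:
  assumes "\<forall>k<n. \<forall>m. f k = Some m \<longrightarrow> m<n" and "acyclic (rel n f)"
  shows "det (Dm n f) = 1"
proof -
  obtain N where "N = card {k. k<n \<and> f k \<noteq> None}" by blast
  thus ?thesis using assms
  proof (induction N arbitrary: f rule: less_induct)
    case (less N f)
    note rng = less.prems(2) and acyc = less.prems(3)
    let ?R = "rel n f"
    show ?case
    proof (cases "?R = {}")
      case True
      hence "\<And>k. k < n \<Longrightarrow> f k = None" unfolding rel_def by auto
      hence "Dm n f = 1\<^sub>m n" unfolding Dm_def vv_def by (intro eq_matI, auto simp: kd_def)
      thus ?thesis by simp
    next
      case False
      have "wf ?R" by (rule finite_acyclic_wf[OF rel_finite[OF rng] acyc])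
      moreover obtain x0 where "x0 \<in> Domain ?R" using False by auto
      ultimately obtain x where xD: "x \<in> Domain ?R" and xmin: "\<And>y. (y,x) \<in> ?R \<Longrightarrow> y \<notin> Domain ?R"
        unfolding wf_eq_minimal by metis
      have noin: "\<And>y. (y,x) \<notin> ?R" using xmin by blast
      from xD have x: "x < n" and fx: "f x \<noteq> None" unfolding rel_def by auto
      define f' where "f' = f(x := None)"
      have sub: "rel n f' \<subseteq> ?R" unfolding rel_def f'_def by (auto split: if_splits)
      have rng': "\<forall>k<n. \<forall>m. f' k = Some m \<longrightarrow> m<n" using rng unfolding f'_def by auto
      have acyc': "acyclic (rel n f')" using acyclic_subset[OF acyc sub] .
      have "{k. k<n \<and> f' k \<noteq> None} = {k. k<n \<and> f k \<noteq> None} - {x}" unfolding f'_def by auto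
      hence "card {k. k<n \<and> f' k \<noteq> None} < N" using less.prems(1) x fx
        by (metis (mono_tags, lifting) card_Diff1_less finite_nat_set_iff_bounded mem_Collect_eq)
      hence IH: "det (Dm n f') = 1" using less.IH rng' acyc' by blast
      have noin': "\<And>y. (y,x) \<notin> rel n f'" using noin sub by blast
      have "det (Dm n f) = cofactor (Dm n f) x x" by (rule Dm_col[OF x noin])
      also have "\<dots> = cofactor (Dm n f') x x" unfolding cofactor_def
        by (subst Dm_delete_eq[of x f f'], auto simp: f'_def)
      also have "\<dots> = det (Dm n f')" by (rule Dm_col[OF x noin', symmetric])
      finally show ?thesis using IH by simp
    qed
  qed
qed

lemma Dm_det:
  assumes "\<forall>k<n. \<forall>m. f k = Some m \<longrightarrow> m<n"
  shows "det (Dm n f) = (if acyclic (rel n f) then 1 else 0)"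
  using Dm_acyclic[OF assms] Dm_cyclic[OF assms] unfolding acyclic_def by auto




lemma arcs_finite: "finite (arcs n W)"
proof -
  have "arcs n W \<subseteq> {0..<n} \<times> {0..<n}" unfolding arcs_def by auto
  thus ?thesis by (rule finite_subset, simp)
qed

lemma outdeg0_iff: assumes "finite F" shows "outdeg F r = 0 \<longleftrightarrow> (\<forall>y. (r,y) \<notin> F)"
proof -
  have "finite {j. (r,j) \<in> F}" using finite_subset[of "{j. (r,j) \<in> F}" "snd ` F"] assms by force
  thus ?thesis unfolding outdeg_def by auto
qed

lemma sv_of_outdeg:
  assumes "F \<subseteq> arcs n W" "\<forall>i<n. outdeg F i \<le> 1"
  shows "single_valued F"
proof (rule single_valuedI)
  fix x y z assume xy: "(x,y) \<in> F" and xz: "(x,z) \<in> F"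
  hence x: "x < n" using assms(1) unfolding arcs_def by auto
  have fin: "finite {j. (x,j) \<in> F}"
    using finite_subset[of "{j. (x,j) \<in> F}" "snd ` arcs n W"] assms(1) arcs_finite by force
  have "card {j. (x,j) \<in> F} \<le> Suc 0" using assms(2) x unfolding outdeg_def by auto
  thus "y = z" using card_le_Suc0_iff_eq[OF fin] xy xz by auto
qed

lemma rtrancl_sub_weak: "F\<^sup>* \<subseteq> (F \<union> F\<inverse>)\<^sup>*"
  by (rule rtrancl_mono, blast)

lemma weak_sym: "(i,j) \<in> (F \<union> F\<inverse>)\<^sup>* \<Longrightarrow> (j,i) \<in> (F \<union> F\<inverse>)\<^sup>*"
proof -
  assume "(i,j) \<in> (F \<union> F\<inverse>)\<^sup>*"
  hence "(j,i) \<in> ((F \<union> F\<inverse>)\<inverse>)\<^sup>*" by (simp add: rtrancl_converse)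
  moreover have "(F \<union> F\<inverse>)\<inverse> = F \<union> F\<inverse>" by auto
  ultimately show ?thesis by simp
qed

lemma weak_to_root:
  assumes sv: "single_valued F" and r: "\<forall>y. (r,y) \<notin> F" and p: "(r,y) \<in> (F \<union> F\<inverse>)\<^sup>*"
  shows "(y,r) \<in> F\<^sup>*"
  using p
proof (induction rule: rtrancl_induct)
  case base thus ?case by simp
next
  case (step y z)
  from step.hyps(2) show ?case
  proof
    assume yz: "(y,z) \<in> F"
    hence "y \<noteq> r" using r by auto
    with step.IH obtain w where "(y,w) \<in> F" "(w,r) \<in> F\<^sup>*" by (meson converse_rtranclE)
    moreover have "w = z" using sv yz calculation(1) unfolding single_valued_def by blast
    ultimately show ?thesis by simp
  next
    assume "(y,z) \<in> F\<inverse>"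
    hence "(z,y) \<in> F" by simp
    thus ?thesis using step.IH by (meson converse_rtrancl_into_rtrancl)
  qed
qed

lemma root_exists:
  assumes "finite F" "acyclic F"
  shows "\<exists>r. (i,r) \<in> F\<^sup>* \<and> (\<forall>y. (r,y) \<notin> F)"
proof -
  have wf: "wf (F\<inverse>)" by (rule finite_acyclic_wf_converse[OF assms])
  have "i \<in> {y. (i,y) \<in> F\<^sup>*}" by simp
  then obtain z where z: "z \<in> {y. (i,y) \<in> F\<^sup>*}" and zm: "\<And>y. (y,z) \<in> F\<inverse> \<Longrightarrow> y \<notin> {y. (i,y) \<in> F\<^sup>*}"
    using wf unfolding wf_eq_minimal by metis
  have "\<forall>y. (z,y) \<notin> F"
  proof (intro allI notI)
    fix y assume "(z,y) \<in> F"
    moreover hence "(i,y) \<in> F\<^sup>*" using z by auto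
    ultimately show False using zm[of y] by auto
  qed
  thus ?thesis using z by auto
qed

lemma forest_iff:
  "is_in_forest n W F \<longleftrightarrow> F \<subseteq> arcs n W \<and> (\<forall>i<n. outdeg F i \<le> 1) \<and> acyclic F"
proof
  assume H: "is_in_forest n W F"
  hence sub: "F \<subseteq> arcs n W" and od: "\<forall>i<n. outdeg F i \<le> 1" unfolding is_in_forest_def by auto
  have fin: "finite F" using finite_subset[OF sub arcs_finite] .
  have sv: "single_valued F" using sv_of_outdeg[OF sub od] .
  have "acyclic F" unfolding acyclic_def
  proof (intro allI notI)
    fix x assume cyc: "(x,x) \<in> F\<^sup>+"
    have "x \<in> Domain F" using cyc by (blast elim: converse_tranclE)
    hence x: "x < n" using sub unfolding arcs_def by auto
    then obtain r where "r < n" "weak_conn F x r" and r0: "outdeg F r = 0"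
      using H unfolding is_in_forest_def by blast
    hence path: "(x,r) \<in> (F \<union> F\<inverse>)\<^sup>*" unfolding weak_conn_def by simp
    have "\<exists>c. (r,c) \<in> F\<^sup>* \<and> (c,c) \<in> F\<^sup>+"
      using path
    proof (induction rule: rtrancl_induct)
      case base thus ?case using cyc by auto
    next
      case (step y z)
      then obtain c where yc: "(y,c) \<in> F\<^sup>*" and cc: "(c,c) \<in> F\<^sup>+" by blast
      from step.hyps(2) show ?case
      proof
        assume yz: "(y,z) \<in> F"
        show ?thesis
        proof (cases "y = c")
          case True
          from cc obtain w where "(c,w) \<in> F" "(w,c) \<in> F\<^sup>*" by (meson converse_tranclE r_into_rtrancl trancl_into_rtrancl)
          moreover have "w = z" using sv yz True calculation(1) unfolding single_valued_def by blast
          ultimately show ?thesis using cc by blast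
        next
          case False
          with yc obtain w where "(y,w) \<in> F" "(w,c) \<in> F\<^sup>*" by (meson converse_rtranclE)
          moreover have "w = z" using sv yz calculation(1) unfolding single_valued_def by blast
          ultimately show ?thesis using cc by blast
        qed
      next
        assume "(y,z) \<in> F\<inverse>"
        hence "(z,y) \<in> F" by simp
        thus ?thesis using yc cc by (meson converse_rtrancl_into_rtrancl)
      qed
    qed
    then obtain c where rc: "(r,c) \<in> F\<^sup>*" and cc: "(c,c) \<in> F\<^sup>+" by blast
    have rno: "\<forall>y. (r,y) \<notin> F" using r0 outdeg0_iff[OF fin] by simp
    show False
    proof (cases "r = c")
      case True thus False using cc rno by (blast elim: converse_tranclE)
    next
      case False thus False using rc rno by (meson converse_rtranclE)
    qed
  qed
  thus "F \<subseteq> arcs n W \<and> (\<forall>i<n. outdeg F i \<le> 1) \<and> acyclic F" using sub od by simp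
next
  assume H: "F \<subseteq> arcs n W \<and> (\<forall>i<n. outdeg F i \<le> 1) \<and> acyclic F"
  hence sub: "F \<subseteq> arcs n W" and od: "\<forall>i<n. outdeg F i \<le> 1" and ac: "acyclic F" by auto
  have fin: "finite F" using finite_subset[OF sub arcs_finite] .
  have sv: "single_valued F" using sv_of_outdeg[OF sub od] .
  have U: "\<forall>i<n. \<exists>!r. r < n \<and> weak_conn F i r \<and> outdeg F r = 0"
  proof (intro allI impI)
    fix i assume i: "i < n"
    obtain r where ir: "(i,r) \<in> F\<^sup>*" and rno: "\<forall>y. (r,y) \<notin> F" using root_exists[OF fin ac] by blast
    have rn: "r < n"
    proof (cases "i = r")
      case True thus ?thesis using i by simp
    next
      case False
      then obtain w where "(w,r) \<in> F" using ir by (meson rtranclE)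
      thus ?thesis using sub unfolding arcs_def by auto
    qed
    have wr: "weak_conn F i r" unfolding weak_conn_def using ir rtrancl_sub_weak by blast
    have r0: "outdeg F r = 0" using rno outdeg0_iff[OF fin] by simp
    have uniq: "r' = r" if H': "r' < n \<and> weak_conn F i r' \<and> outdeg F r' = 0" for r'
    proof -
      have ir': "(i,r') \<in> (F \<union> F\<inverse>)\<^sup>*" using H' unfolding weak_conn_def by auto
      have r'0: "outdeg F r' = 0" using H' by auto
      have "(r, i) \<in> (F \<union> F\<inverse>)\<^sup>*" by (rule weak_sym[OF wr[unfolded weak_conn_def]])
      hence "(r, r') \<in> (F \<union> F\<inverse>)\<^sup>*" using ir' by (rule rtrancl_trans)
      hence rr: "(r', r) \<in> F\<^sup>*" by (rule weak_to_root[OF sv rno])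
      have "\<forall>y. (r',y) \<notin> F" using r'0 outdeg0_iff[OF fin] by simp
      with rr show "r' = r" by (meson converse_rtranclE)
    qed
    show "\<exists>!r. r < n \<and> weak_conn F i r \<and> outdeg F r = 0"
      by (rule ex1I[of _ r], simp add: rn wr r0, rule uniq)
  qed
  show "is_in_forest n W F" unfolding is_in_forest_def by (rule conjI[OF sub conjI[OF od U]])
qed

lemma weak_conn_root_iff:
  assumes "is_in_forest n W F" and j0: "outdeg F j = 0"
  shows "weak_conn F i j \<longleftrightarrow> (i,j) \<in> F\<^sup>*"
proof -
  have sub: "F \<subseteq> arcs n W" and od: "\<forall>i<n. outdeg F i \<le> 1" using assms(1) unfolding forest_iff by auto
  have fin: "finite F" using finite_subset[OF sub arcs_finite] .
  have sv: "single_valued F" using sv_of_outdeg[OF sub od] .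
  have jno: "\<forall>y. (j,y) \<notin> F" using j0 outdeg0_iff[OF fin] by simp
  show ?thesis
  proof
    assume "weak_conn F i j"
    hence "(j,i) \<in> (F \<union> F\<inverse>)\<^sup>*" unfolding weak_conn_def by (rule weak_sym)
    thus "(i,j) \<in> F\<^sup>*" using weak_to_root[OF sv jno] by blast
  next
    assume "(i,j) \<in> F\<^sup>*"
    thus "weak_conn F i j" unfolding weak_conn_def using rtrancl_sub_weak by blast
  qed
qed




definition NB :: "real mat \<Rightarrow> nat \<Rightarrow> nat \<Rightarrow> nat set" where
  "NB W n k = {m. m < n \<and> W $$ (k,m) \<noteq> 0}"
definition C0 :: "real mat \<Rightarrow> nat \<Rightarrow> nat \<Rightarrow> nat option set" where
  "C0 W n k = insert None (Some ` NB W n k)"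
definition aa :: "real mat \<Rightarrow> real \<Rightarrow> nat \<Rightarrow> nat option \<Rightarrow> real" where
  "aa W t k c = (case c of None \<Rightarrow> 1 | Some m \<Rightarrow> t * W $$ (k,m))"

lemma C0_finite: "finite (C0 W n k)" unfolding C0_def NB_def by auto

lemma sum_kd3[simp]: assumes "i < n" shows "(\<Sum>l<n. kd i l * g l) = g i"
  using sum_kd[OF assms, of g] by (simp add: atLeast0LessThan)

lemma entry_C0:
  assumes diag: "\<forall>i<n. W $$ (i,i) = 0" and i: "i < n" and k: "k < n"
  shows "(1\<^sub>m n + t \<cdot>\<^sub>m laplacian n W) $$ (i,k) = (\<Sum>c\<in>C0 W n i. aa W t i c * vv i c k)"
proof -
  have nn: "None \<notin> Some ` NB W n i" by auto
  have "(\<Sum>c\<in>C0 W n i. aa W t i c * vv i c k) = kd i k + (\<Sum>c\<in>Some ` NB W n i. aa W t i c * vv i c k)"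
    unfolding C0_def by (subst sum.insert[OF _ nn], auto simp: NB_def aa_def vv_def)
  also have "(\<Sum>c\<in>Some ` NB W n i. aa W t i c * vv i c k) = (\<Sum>m\<in>NB W n i. t * W $$ (i,m) * (kd i k - kd m k))"
    by (subst sum.reindex, auto simp: aa_def vv_def)
  also have "\<dots> = t * (kd i k * (\<Sum>m\<in>NB W n i. W $$ (i,m)) - (\<Sum>m\<in>NB W n i. W $$ (i,m) * kd m k))"
    by (simp add: sum_distrib_left right_diff_distrib sum_subtractf sum_distrib_right algebra_simps)
  also have "(\<Sum>m\<in>NB W n i. W $$ (i,m) * kd m k) = W $$ (i,k)"
  proof -
    have "(\<Sum>m\<in>NB W n i. W $$ (i,m) * kd m k) = (\<Sum>m\<in>{0..<n}. W $$ (i,m) * kd m k)"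
      by (rule sum.mono_neutral_left, auto simp: NB_def)
    also have "\<dots> = W $$ (i,k)" using sum_kd2[OF k, of "\<lambda>m. W $$ (i,m)"] by (simp add: atLeast0LessThan mult.commute)
    finally show ?thesis .
  qed
  also have "(\<Sum>m\<in>NB W n i. W $$ (i,m)) = (\<Sum>m\<in>{0..<n} - {i}. W $$ (i,m))"
  proof -
    have "(\<Sum>m\<in>NB W n i. W $$ (i,m)) = (\<Sum>m\<in>{0..<n}. W $$ (i,m))"
      by (rule sum.mono_neutral_left, auto simp: NB_def)
    also have "\<dots> = (\<Sum>m\<in>{0..<n} - {i}. W $$ (i,m))"
      using sum.remove[of "{0..<n}" i "\<lambda>m. W $$ (i,m)"] i diag by simp
    finally show ?thesis .
  qed
  finally show ?thesis unfolding laplacian_def using i k diag by (auto simp: kd_def)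
qed

lemma det_expand_C0:
  assumes diag: "\<forall>i<n. W $$ (i,i) = 0"
  shows "det (1\<^sub>m n + t \<cdot>\<^sub>m laplacian n W) =
    (\<Sum>f\<in>PiE {0..<n} (C0 W n). (\<Prod>i=0..<n. aa W t i (f i)) * det (Dm n f))"
  unfolding Dm_def
  by (rule det_expand, simp add: laplacian_def, rule C0_finite, rule entry_C0[OF diag])

lemma PiE_C0_range: "f \<in> PiE {0..<n} (C0 W n) \<Longrightarrow> \<forall>k<n. \<forall>m. f k = Some m \<longrightarrow> m<n"
  unfolding C0_def NB_def by (auto simp: PiE_def Pi_def)




definition fof :: "nat \<Rightarrow> (nat \<times> nat) set \<Rightarrow> nat \<Rightarrow> nat option" where
  "fof n F = (\<lambda>k. if k < n then (if \<exists>m. (k,m) \<in> F then Some (THE m. (k,m) \<in> F) else None) else undefined)"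

lemma prod_aa: "(\<Prod>k=0..<n. aa W t k (f k)) = t ^ card (rel n f) * sg_weight W (rel n f)"
proof -
  let ?D = "{k. k < n \<and> f k \<noteq> None}"
  have A: "(\<Prod>k=0..<n. aa W t k (f k)) = (\<Prod>k\<in>?D. aa W t k (f k))"
    by (rule prod.mono_neutral_right, auto simp: aa_def)
  have B: "(\<Prod>k\<in>?D. aa W t k (f k)) = (\<Prod>k\<in>?D. t * W $$ (k, the (f k)))"
    by (rule prod.cong, auto simp: aa_def)
  have C: "(\<Prod>k\<in>?D. t * W $$ (k, the (f k))) = t ^ card ?D * (\<Prod>k\<in>?D. W $$ (k, the (f k)))"
    by (simp add: prod.distrib)
  have "rel n f = (\<lambda>k. (k, the (f k))) ` ?D" unfolding rel_def by force
  moreover have inj: "inj_on (\<lambda>k. (k, the (f k))) ?D" by (rule inj_onI, auto)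
  ultimately have E: "card (rel n f) = card ?D" "sg_weight W (rel n f) = (\<Prod>k\<in>?D. W $$ (k, the (f k)))"
    unfolding sg_weight_def by (simp_all add: card_image prod.reindex)
  show ?thesis using A B C E by simp
qed

lemma fof_rel: assumes "f \<in> PiE {0..<n} (C0 W n)" shows "fof n (rel n f) = f"
proof
  fix k show "fof n (rel n f) k = f k"
  proof (cases "k < n")
    case True thus ?thesis unfolding fof_def rel_def by (cases "f k", auto)
  next
    case False thus ?thesis using assms unfolding fof_def by (auto simp: PiE_def extensional_def)
  qed
qed

lemma rel_forest:
  assumes "f \<in> PiE {0..<n} (C0 W n)" "acyclic (rel n f)"
  shows "rel n f \<in> in_forests n W"
proof -
  have "rel n f \<subseteq> arcs n W"
  proof
    fix x assume "x \<in> rel n f"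
    then obtain k m where x: "x = (k,m)" "k < n" "f k = Some m" unfolding rel_def by auto
    hence "Some m \<in> C0 W n k" using assms(1) by (auto simp: PiE_def Pi_def)
    hence "m \<in> NB W n k" unfolding C0_def by auto
    thus "x \<in> arcs n W" using x unfolding NB_def arcs_def by auto
  qed
  moreover have "\<forall>i<n. outdeg (rel n f) i \<le> 1"
  proof (intro allI impI)
    fix i assume "i < n"
    hence "{j. (i,j) \<in> rel n f} = set_option (f i)" unfolding rel_def by auto
    thus "outdeg (rel n f) i \<le> 1" unfolding outdeg_def by (cases "f i", auto)
  qed
  ultimately show ?thesis unfolding in_forests_def using forest_iff assms(2) by auto
qed

lemma forest_props:
  assumes "F \<in> in_forests n W"
  shows "F \<subseteq> arcs n W" "single_valued F" "acyclic F" "finite F"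
proof -
  have H: "F \<subseteq> arcs n W" "\<forall>i<n. outdeg F i \<le> 1" "acyclic F"
    using assms forest_iff unfolding in_forests_def by auto
  thus "F \<subseteq> arcs n W" "acyclic F" by auto
  show "single_valued F" by (rule sv_of_outdeg[OF H(1,2)])
  show "finite F" using finite_subset[OF H(1) arcs_finite] .
qed

lemma rel_fof: assumes "F \<in> in_forests n W" shows "rel n (fof n F) = F"
proof -
  note P = forest_props[OF assms]
  show ?thesis
  proof (rule equalityI; rule subsetI)
    fix x assume "x \<in> rel n (fof n F)"
    then obtain k m where x: "x = (k,m)" "k < n" "fof n F k = Some m" unfolding rel_def by auto
    hence ex: "\<exists>m. (k,m) \<in> F" and m: "m = (THE m. (k,m) \<in> F)" unfolding fof_def by (auto split: if_splits)
    from ex obtain m' where m': "(k,m') \<in> F" by auto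
    have "(THE m. (k,m) \<in> F) = m'" using P(2) m' unfolding single_valued_def by blast
    thus "x \<in> F" using m m' x by simp
  next
    fix x assume xF: "x \<in> F"
    then obtain k m where x: "x = (k,m)" by (cases x)
    have k: "k < n" using P(1) xF x unfolding arcs_def by auto
    have "(THE m. (k,m) \<in> F) = m" using P(2) xF x unfolding single_valued_def by blast
    hence "fof n F k = Some m" unfolding fof_def using k xF x by auto
    thus "x \<in> rel n (fof n F)" unfolding rel_def using k x by auto
  qed
qed

lemma fof_PiE: assumes "F \<in> in_forests n W" shows "fof n F \<in> PiE {0..<n} (C0 W n)"
proof -
  note P = forest_props[OF assms]
  have "\<And>k. k < n \<Longrightarrow> fof n F k \<in> C0 W n k"
  proof -
    fix k assume k: "k < n"
    show "fof n F k \<in> C0 W n k"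
    proof (cases "\<exists>m. (k,m) \<in> F")
      case True
      then obtain m where m: "(k,m) \<in> F" by auto
      have "(THE m. (k,m) \<in> F) = m" using P(2) m unfolding single_valued_def by blast
      moreover have "m \<in> NB W n k" using P(1) m unfolding arcs_def NB_def by auto
      ultimately show ?thesis unfolding fof_def C0_def using k True by auto
    next
      case False thus ?thesis unfolding fof_def C0_def using k by auto
    qed
  qed
  thus ?thesis unfolding PiE_def Pi_def extensional_def fof_def by auto
qed

lemma reindex_forests:
  "(\<Sum>f\<in>{f\<in>PiE {0..<n} (C0 W n). acyclic (rel n f) \<and> P (rel n f)}. \<Prod>k=0..<n. aa W t k (f k))
   = (\<Sum>F\<in>{F\<in>in_forests n W. P F}. t ^ card F * sg_weight W F)"
proof (rule sum.reindex_bij_witness[where j="rel n" and i="fof n"])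
  fix f assume "f \<in> {f\<in>PiE {0..<n} (C0 W n). acyclic (rel n f) \<and> P (rel n f)}"
  hence f: "f \<in> PiE {0..<n} (C0 W n)" "acyclic (rel n f)" "P (rel n f)" by auto
  show "fof n (rel n f) = f" by (rule fof_rel[OF f(1)])
  show "rel n f \<in> {F\<in>in_forests n W. P F}" using rel_forest[OF f(1,2)] f(3) by auto
  show "t ^ card (rel n f) * sg_weight W (rel n f) = (\<Prod>k=0..<n. aa W t k (f k))" by (simp add: prod_aa)
next
  fix F assume "F \<in> {F\<in>in_forests n W. P F}"
  hence F: "F \<in> in_forests n W" "P F" by auto
  show "rel n (fof n F) = F" by (rule rel_fof[OF F(1)])
  show "fof n F \<in> {f\<in>PiE {0..<n} (C0 W n). acyclic (rel n f) \<and> P (rel n f)}"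
    using fof_PiE[OF F(1)] rel_fof[OF F(1)] forest_props(3)[OF F(1)] F(2) by auto
qed




lemma PiE_C0_finite: "finite (PiE {0..<n} (C0 W n))"
  by (rule finite_PiE, simp, rule C0_finite)

lemma det_formula:
  assumes diag: "\<forall>i<n. W $$ (i,i) = 0"
  shows "det (1\<^sub>m n + t \<cdot>\<^sub>m laplacian n W) = (\<Sum>F\<in>in_forests n W. t ^ card F * sg_weight W F)"
proof -
  have "det (1\<^sub>m n + t \<cdot>\<^sub>m laplacian n W) =
    (\<Sum>f\<in>PiE {0..<n} (C0 W n). (\<Prod>i=0..<n. aa W t i (f i)) * det (Dm n f))"
    by (rule det_expand_C0[OF diag])
  also have "\<dots> = (\<Sum>f\<in>PiE {0..<n} (C0 W n). if acyclic (rel n f) \<and> True then (\<Prod>i=0..<n. aa W t i (f i)) else 0)"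
    by (rule sum.cong[OF refl], simp add: Dm_det[OF PiE_C0_range])
  also have "\<dots> = (\<Sum>f\<in>{f\<in>PiE {0..<n} (C0 W n). acyclic (rel n f) \<and> True}. \<Prod>i=0..<n. aa W t i (f i))"
    by (rule sum.inter_filter[OF PiE_C0_finite, symmetric])
  also have "\<dots> = (\<Sum>F\<in>{F\<in>in_forests n W. True}. t ^ card F * sg_weight W F)"
    by (rule reindex_forests)
  finally show ?thesis by simp
qed

lemma outdeg_rel: "j < n \<Longrightarrow> outdeg (rel n f) j = 0 \<longleftrightarrow> f j = None"
proof -
  assume j: "j < n"
  hence "{m. (j,m) \<in> rel n f} = set_option (f j)" unfolding rel_def by auto
  thus ?thesis unfolding outdeg_def by (cases "f j", auto)
qed

definition C1 :: "real mat \<Rightarrow> nat \<Rightarrow> nat \<Rightarrow> nat \<Rightarrow> nat \<Rightarrow> nat option set" where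
  "C1 W n i j k = (if k = j then {None, Some i} else C0 W n k)"
definition a1 :: "real mat \<Rightarrow> real \<Rightarrow> nat \<Rightarrow> nat \<Rightarrow> nat option \<Rightarrow> real" where
  "a1 W t j k c = (if k = j then (case c of None \<Rightarrow> 1 | Some _ \<Rightarrow> -1) else aa W t k c)"

lemma adj_formula:
  assumes diag: "\<forall>i<n. W $$ (i,i) = 0" and i: "i < n" and j: "j < n"
  shows "adj_mat (1\<^sub>m n + t \<cdot>\<^sub>m laplacian n W) $$ (i,j) =
    (\<Sum>F\<in>{F\<in>in_forests n W. outdeg F j = 0 \<and> (i,j) \<in> F\<^sup>*}. t ^ card F * sg_weight W F)"
proof -
  define A where "A = 1\<^sub>m n + t \<cdot>\<^sub>m laplacian n W"
  have cA: "A \<in> carrier_mat n n" unfolding A_def laplacian_def by simp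
  define B where "B = mat n n (\<lambda>(k,l). if k = j then kd i l else A $$ (k,l))"
  have cB: "B \<in> carrier_mat n n" unfolding B_def by simp
  have "adj_mat A $$ (i,j) = cofactor A j i" unfolding adj_mat_def using cA i j by simp
  also have "\<dots> = cofactor B j i"
  proof -
    have "mat_delete A j i = mat_delete B j i"
      unfolding mat_delete_def B_def using cA by (intro eq_matI, auto)
    thus ?thesis unfolding cofactor_def by simp
  qed
  also have "\<dots> = det B"
  proof -
    have "det B = (\<Sum>l<n. B $$ (j,l) * cofactor B j l)" by (rule laplace_expansion_row[OF cB j])
    also have "\<dots> = (\<Sum>l<n. kd i l * cofactor B j l)" by (rule sum.cong, auto simp: B_def j)
    also have "\<dots> = cofactor B j i" using i by simp
    finally show ?thesis by simp
  qed
  also have "det B = (\<Sum>f\<in>PiE {0..<n} (C1 W n i j). (\<Prod>k=0..<n. a1 W t j k (f k)) * det (Dm n f))"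
    unfolding Dm_def
  proof (rule det_expand[OF cB])
    show "\<And>k. k < n \<Longrightarrow> finite (C1 W n i j k)" unfolding C1_def using C0_finite by auto
  next
    fix k l assume k: "k < n" and l: "l < n"
    show "B $$ (k,l) = (\<Sum>c\<in>C1 W n i j k. a1 W t j k c * vv k c l)"
    proof (cases "k = j")
      case True thus ?thesis unfolding B_def C1_def a1_def vv_def using k l by simp
    next
      case False thus ?thesis unfolding B_def C1_def a1_def A_def using k l entry_C0[OF diag k l] by simp
    qed
  qed
  also have "\<dots> = (\<Sum>F\<in>{F\<in>in_forests n W. outdeg F j = 0 \<and> (i,j) \<in> F\<^sup>*}. t ^ card F * sg_weight W F)"
  proof -
    let ?S0 = "{f\<in>PiE {0..<n} (C0 W n). f j = None}"
    let ?u = "\<lambda>f. f(j := Some i)"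
    let ?h = "\<lambda>f. (\<Prod>k=0..<n. a1 W t j k (f k)) * det (Dm n f)"
    let ?P = "\<lambda>F. outdeg F j = 0 \<and> (i,j) \<in> F\<^sup>*"
    have fin: "finite ?S0" using PiE_C0_finite by simp
    have set: "PiE {0..<n} (C1 W n i j) = ?S0 \<union> ?u ` ?S0"
    proof (rule equalityI; rule subsetI)
      fix f assume f: "f \<in> PiE {0..<n} (C1 W n i j)"
      show "f \<in> ?S0 \<union> ?u ` ?S0"
      proof (cases "f j = None")
        case True
        hence "f \<in> ?S0" using f unfolding C1_def C0_def by (auto simp: PiE_def Pi_def split: if_splits)
        thus ?thesis by simp
      next
        case False
        hence fj: "f j = Some i" using f j unfolding C1_def by (auto simp: PiE_def Pi_def)
        have "f(j := None) \<in> ?S0" using f j unfolding C1_def C0_def by (auto simp: PiE_def Pi_def extensional_def split: if_splits)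
        moreover have "f = ?u (f(j := None))" using fj by auto
        ultimately show ?thesis by blast
      qed
    next
      fix f assume "f \<in> ?S0 \<union> ?u ` ?S0"
      thus "f \<in> PiE {0..<n} (C1 W n i j)" using j unfolding C1_def C0_def
        by (auto simp: PiE_def Pi_def extensional_def split: if_splits)
    qed
    have disj: "?S0 \<inter> ?u ` ?S0 = {}" by auto
    have inj: "inj_on ?u ?S0"
    proof (rule inj_onI)
      fix f g assume "f \<in> ?S0" "g \<in> ?S0" "?u f = ?u g"
      thus "f = g" by (metis (mono_tags, lifting) fun_upd_idem mem_Collect_eq fun_upd_upd)
    qed
    have "(\<Sum>f\<in>PiE {0..<n} (C1 W n i j). ?h f) = (\<Sum>f\<in>?S0. ?h f) + (\<Sum>f\<in>?u ` ?S0. ?h f)"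
      unfolding set by (rule sum.union_disjoint[OF fin finite_imageI[OF fin] disj])
    also have "(\<Sum>f\<in>?u ` ?S0. ?h f) = (\<Sum>f\<in>?S0. ?h (?u f))"
      by (rule sum.reindex[OF inj, unfolded comp_def])
    also have "(\<Sum>f\<in>?S0. ?h f) + (\<Sum>f\<in>?S0. ?h (?u f)) = (\<Sum>f\<in>?S0. ?h f + ?h (?u f))"
      by (simp add: sum.distrib)
    also have "\<dots> = (\<Sum>f\<in>?S0. if acyclic (rel n f) \<and> (i,j) \<in> (rel n f)\<^sup>* then (\<Prod>k=0..<n. aa W t k (f k)) else 0)"
    proof (rule sum.cong[OF refl])
      fix f assume "f \<in> ?S0"
      hence f: "f \<in> PiE {0..<n} (C0 W n)" and fj: "f j = None" by auto
      have p1: "(\<Prod>k=0..<n. a1 W t j k (f k)) = (\<Prod>k=0..<n. aa W t k (f k))"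
        by (rule prod.cong, auto simp: a1_def aa_def fj)
      have p2: "(\<Prod>k=0..<n. a1 W t j k (?u f k)) = - (\<Prod>k=0..<n. aa W t k (f k))"
      proof -
        have "(\<Prod>k=0..<n. a1 W t j k (?u f k)) = a1 W t j j (?u f j) * (\<Prod>k\<in>{0..<n} - {j}. a1 W t j k (?u f k))"
          by (rule prod.remove[of "{0..<n}" j "\<lambda>k. a1 W t j k (?u f k)"]; simp add: j)
        also have "(\<Prod>k\<in>{0..<n} - {j}. a1 W t j k (?u f k)) = (\<Prod>k\<in>{0..<n} - {j}. aa W t k (f k))"
          by (rule prod.cong, auto simp: a1_def)
        also have "\<dots> = (\<Prod>k=0..<n. aa W t k (f k))"
          using prod.remove[of "{0..<n}" j "\<lambda>k. aa W t k (f k)"] j fj by (simp add: aa_def)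
        finally show ?thesis by (simp add: a1_def)
      qed
      have rng: "\<forall>k<n. \<forall>m. f k = Some m \<longrightarrow> m<n" by (rule PiE_C0_range[OF f])
      have rng': "\<forall>k<n. \<forall>m. ?u f k = Some m \<longrightarrow> m<n" using rng i by auto
      have relu: "rel n (?u f) = insert (j,i) (rel n f)" unfolding rel_def using j fj by (auto split: if_splits)
      have d1: "det (Dm n f) = (if acyclic (rel n f) then 1 else 0)" by (rule Dm_det[OF rng])
      have d2: "det (Dm n (?u f)) = (if acyclic (insert (j,i) (rel n f)) then 1 else 0)"
        unfolding relu[symmetric] by (rule Dm_det[OF rng'])
      show "?h f + ?h (?u f) = (if acyclic (rel n f) \<and> (i,j) \<in> (rel n f)\<^sup>* then (\<Prod>k=0..<n. aa W t k (f k)) else 0)"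
        unfolding p1 p2 d1 d2 by simp
    qed
    also have "\<dots> = (\<Sum>f\<in>PiE {0..<n} (C0 W n). if f j = None then (if acyclic (rel n f) \<and> (i,j) \<in> (rel n f)\<^sup>* then (\<Prod>k=0..<n. aa W t k (f k)) else 0) else 0)"
      by (rule sum.inter_filter[OF PiE_C0_finite])
    also have "\<dots> = (\<Sum>f\<in>PiE {0..<n} (C0 W n). if acyclic (rel n f) \<and> ?P (rel n f) then (\<Prod>k=0..<n. aa W t k (f k)) else 0)"
      by (rule sum.cong[OF refl], auto simp: outdeg_rel[OF j])
    also have "\<dots> = (\<Sum>f\<in>{f\<in>PiE {0..<n} (C0 W n). acyclic (rel n f) \<and> ?P (rel n f)}. \<Prod>k=0..<n. aa W t k (f k))"
      by (rule sum.inter_filter[OF PiE_C0_finite, symmetric])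
    also have "\<dots> = (\<Sum>F\<in>{F\<in>in_forests n W. ?P F}. t ^ card F * sg_weight W F)"
      by (rule reindex_forests)
    finally show ?thesis .
  qed
  finally show ?thesis unfolding A_def .
qed




lemma in_forests_finite: "finite (in_forests n W)"
proof -
  have "in_forests n W \<subseteq> Pow (arcs n W)" using forest_props(1) by blast
  thus ?thesis using arcs_finite finite_subset by blast
qed

lemma card_forest:
  assumes "F \<in> in_forests n W"
  shows "card F \<le> n - forest_dim n W"
proof -
  note P = forest_props[OF assms]
  let ?D = "{k. k<n \<and> outdeg F k \<noteq> 0}" and ?R = "{r. r<n \<and> outdeg F r = 0}"
  have "?D \<union> ?R = {0..<n}" by auto
  moreover have "?D \<inter> ?R = {}" by auto
  ultimately have cDR: "card ?D + card ?R = n"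
    by (metis (no_types, lifting) card_Un_disjoint card_atLeastLessThan diff_zero finite_Un finite_atLeastLessThan)
  have "fst ` F = ?D"
  proof (rule equalityI; rule subsetI)
    fix k assume "k \<in> fst ` F"
    then obtain y where ky: "(k,y) \<in> F" by force
    hence "k < n" using P(1) unfolding arcs_def by auto
    thus "k \<in> ?D" using ky outdeg0_iff[OF P(4)] by auto
  next
    fix k assume "k \<in> ?D"
    then obtain y where "(k,y) \<in> F" using outdeg0_iff[OF P(4)] by auto
    thus "k \<in> fst ` F" by force
  qed
  moreover have "inj_on fst F" using P(2) unfolding single_valued_def inj_on_def by auto
  ultimately have "card F = card ?D" using card_image by fastforce
  moreover have "forest_dim n W \<le> card ?R"
  proof -
    have "forest_dim n W \<le> num_trees n F" unfolding forest_dim_def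
      by (rule Min_le, simp add: in_forests_finite, use assms in blast)
    thus ?thesis unfolding num_trees_def .
  qed
  ultimately show ?thesis using cDR by linarith
qed

lemma sum_by_card:
  assumes "N = n - forest_dim n W" "N \<le> M"
  shows "(\<Sum>F\<in>{F\<in>in_forests n W. P F}. t ^ card F * sg_weight W F)
       = (\<Sum>k\<le>M. t ^ k * (\<Sum>F\<in>{F\<in>in_forests n W. card F = k \<and> P F}. sg_weight W F))"
proof -
  have fin: "finite {F\<in>in_forests n W. P F}" using in_forests_finite by simp
  have "(\<Sum>F\<in>{F\<in>in_forests n W. P F}. t ^ card F * sg_weight W F)
     = (\<Sum>k\<in>{..M}. \<Sum>F\<in>{F\<in>{F\<in>in_forests n W. P F}. card F = k}. t ^ card F * sg_weight W F)"
    by (rule sum.group[OF fin, symmetric], simp, use card_forest assms in fastforce)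
  also have "\<dots> = (\<Sum>k\<le>M. t ^ k * (\<Sum>F\<in>{F\<in>in_forests n W. card F = k \<and> P F}. sg_weight W F))"
  proof (rule sum.cong[OF refl])
    fix k
    have "{F\<in>{F\<in>in_forests n W. P F}. card F = k} = {F\<in>in_forests n W. card F = k \<and> P F}" by auto
    thus "(\<Sum>F\<in>{F\<in>{F\<in>in_forests n W. P F}. card F = k}. t ^ card F * sg_weight W F) = t ^ k * (\<Sum>F\<in>{F\<in>in_forests n W. card F = k \<and> P F}. sg_weight W F)"
      by (simp add: sum_distrib_left)
  qed
  finally show ?thesis .
qed

lemma det_poly:
  assumes diag: "\<forall>i<n. W $$ (i,i) = 0" and "n - forest_dim n W \<le> M"
  shows "det (1\<^sub>m n + t \<cdot>\<^sub>m laplacian n W) = (\<Sum>k\<le>M. sigma n W k * t ^ k)"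
  unfolding det_formula[OF diag] sigma_def
  using sum_by_card[OF refl assms(2), where P="\<lambda>_. True" and t=t] by (simp add: mult.commute)

lemma adj_poly:
  assumes diag: "\<forall>i<n. W $$ (i,i) = 0" and "n - forest_dim n W \<le> M" and i: "i < n" and j: "j < n"
  shows "adj_mat (1\<^sub>m n + t \<cdot>\<^sub>m laplacian n W) $$ (i,j) = (\<Sum>k\<le>M. t ^ k * Qk n W k $$ (i,j))"
proof -
  have "{F\<in>in_forests n W. outdeg F j = 0 \<and> (i,j) \<in> F\<^sup>*} = {F\<in>in_forests n W. weak_conn F i j \<and> outdeg F j = 0}"
    using weak_conn_root_iff unfolding in_forests_def by auto
  hence "adj_mat (1\<^sub>m n + t \<cdot>\<^sub>m laplacian n W) $$ (i,j) = (\<Sum>F\<in>{F\<in>in_forests n W. weak_conn F i j \<and> outdeg F j = 0}. t ^ card F * sg_weight W F)"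
    using adj_formula[OF diag i j] by simp
  also have "\<dots> = (\<Sum>k\<le>M. t ^ k * Qk n W k $$ (i,j))"
    unfolding sum_by_card[OF refl assms(2)] Qk_def using i j by simp
  finally show ?thesis .
qed

lemma Qk_zero: assumes "n - forest_dim n W < k" "i < n" "j < n" shows "Qk n W k $$ (i,j) = 0"
proof -
  have E: "{F \<in> in_forests n W. card F = k \<and> weak_conn F i j \<and> outdeg F j = 0} = {}"
    using card_forest assms(1) by fastforce
  have "Qk n W k $$ (i,j) = (\<Sum>F\<in>{F \<in> in_forests n W. card F = k \<and> weak_conn F i j \<and> outdeg F j = 0}. sg_weight W F)"
    unfolding Qk_def using assms by simp
  thus ?thesis unfolding E by simp
qed

lemma sigma_zero: assumes "n - forest_dim n W < k" shows "sigma n W k = 0"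
proof -
  have E: "{F \<in> in_forests n W. card F = k} = {}" using card_forest assms by fastforce
  show ?thesis unfolding sigma_def E by simp
qed




lemma mult_entry:
  assumes "A \<in> carrier_mat n n" "B \<in> carrier_mat n n" "i < n" "l < n"
  shows "(A * B) $$ (i,l) = (\<Sum>m<n. A $$ (i,m) * B $$ (m,l))"
  using assms by (simp add: scalar_prod_def atLeast0LessThan)

lemma lap_carrier: "laplacian n W \<in> carrier_mat n n" unfolding laplacian_def by simp

lemma pow_scale:
  fixes L :: "real mat"
  assumes L: "L \<in> carrier_mat n n"
  shows "\<forall>i<n. \<forall>l<n. ((- (t \<cdot>\<^sub>m L)) ^\<^sub>m k) $$ (i,l) = t ^ k * ((- L) ^\<^sub>m k) $$ (i,l)"
proof -
  have dL: "dim_row L = n" "dim_col L = n" using L by auto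
  show ?thesis
proof (induction k)
  case 0 thus ?case using L by simp
next
  case (Suc k)
  have c1: "(- (t \<cdot>\<^sub>m L)) ^\<^sub>m k \<in> carrier_mat n n" using L unfolding carrier_mat_def by auto
  have c2: "(- L) ^\<^sub>m k \<in> carrier_mat n n" using L unfolding carrier_mat_def by auto
  show ?case
  proof (intro allI impI)
    fix i l assume i: "i < n" and l: "l < n"
    have "((- (t \<cdot>\<^sub>m L)) ^\<^sub>m Suc k) $$ (i,l) = (\<Sum>m<n. ((- (t \<cdot>\<^sub>m L)) ^\<^sub>m k) $$ (i,m) * (- (t \<cdot>\<^sub>m L)) $$ (m,l))"
      using mult_entry[OF c1 _ i l, of "- (t \<cdot>\<^sub>m L)"] L by simp
    also have "\<dots> = (\<Sum>m<n. t ^ Suc k * (((- L) ^\<^sub>m k) $$ (i,m) * (- L) $$ (m,l)))"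
      by (rule sum.cong, simp, use Suc.IH i l L dL in \<open>simp add: algebra_simps\<close>)
    also have "\<dots> = t ^ Suc k * ((- L) ^\<^sub>m Suc k) $$ (i,l)"
      using mult_entry[OF c2 _ i l, of "- L"] L by (simp add: sum_distrib_left)
    finally show "((- (t \<cdot>\<^sub>m L)) ^\<^sub>m Suc k) $$ (i,l) = t ^ Suc k * ((- L) ^\<^sub>m Suc k) $$ (i,l)" .
  qed
qed
qed




lemma coeff_ids:
  assumes diag: "\<forall>i<n. W $$ (i,i) = 0" and i: "i < n" and l: "l < n"
  shows "\<forall>k \<le> Suc (Suc (n - forest_dim n W)). Qk n W k $$ (i,l)
     + (case k of 0 \<Rightarrow> 0 | Suc k' \<Rightarrow> (\<Sum>m<n. Qk n W k' $$ (i,m) * laplacian n W $$ (m,l)))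
     - sigma n W k * kd i l = 0"
proof -
  define N where "N = n - forest_dim n W"
  define M where "M = Suc N"
  define L where "L = laplacian n W"
  have cL: "L \<in> carrier_mat n n" unfolding L_def by (rule lap_carrier)
  define QL where "QL k = (\<Sum>m<n. Qk n W k $$ (i,m) * L $$ (m,l))" for k
  define ql where "ql k = (case k of 0 \<Rightarrow> 0 | Suc k' \<Rightarrow> QL k')" for k
  define c where "c k = Qk n W k $$ (i,l) + ql k - sigma n W k * kd i l" for k
  have NM: "n - forest_dim n W \<le> M" unfolding M_def N_def by simp
  have "\<forall>t. (\<Sum>k\<le>Suc M. c k * t ^ k) = 0"
  proof
    fix t :: real
    define A where "A = 1\<^sub>m n + t \<cdot>\<^sub>m L"
    have cA: "A \<in> carrier_mat n n" unfolding A_def using cL by simp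
    have Aent: "\<And>m. m < n \<Longrightarrow> A $$ (m,l) = kd m l + t * L $$ (m,l)"
      unfolding A_def kd_def using cL l by auto
    have "(adj_mat A * A) $$ (i,l) = det A * kd i l"
      unfolding adj_mat(3)[OF cA] using i l by (simp add: kd_def)
    also have "det A = (\<Sum>k\<le>M. sigma n W k * t ^ k)" unfolding A_def L_def by (rule det_poly[OF diag NM])
    finally have E1: "(adj_mat A * A) $$ (i,l) = (\<Sum>k\<le>M. sigma n W k * t ^ k) * kd i l" .
    have "(adj_mat A * A) $$ (i,l) = (\<Sum>m<n. adj_mat A $$ (i,m) * A $$ (m,l))"
      by (rule mult_entry[OF adj_mat(1)[OF cA] cA i l])
    also have "\<dots> = (\<Sum>m<n. (\<Sum>k\<le>M. t ^ k * Qk n W k $$ (i,m)) * (kd m l + t * L $$ (m,l)))"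
    proof (rule sum.cong[OF refl])
      fix m assume "m \<in> {..<n}"
      hence m: "m < n" by simp
      have "adj_mat A $$ (i,m) = (\<Sum>k\<le>M. t ^ k * Qk n W k $$ (i,m))"
        unfolding A_def L_def by (rule adj_poly[OF diag NM i m])
      thus "adj_mat A $$ (i,m) * A $$ (m,l) = (\<Sum>k\<le>M. t ^ k * Qk n W k $$ (i,m)) * (kd m l + t * L $$ (m,l))"
        using Aent[OF m] by simp
    qed
    also have "\<dots> = (\<Sum>m<n. \<Sum>k\<le>M. t ^ k * (kd m l * Qk n W k $$ (i,m)) + t ^ Suc k * (Qk n W k $$ (i,m) * L $$ (m,l)))"
      by (rule sum.cong[OF refl], simp add: sum_distrib_right sum_distrib_left sum.distrib algebra_simps)
    also have "\<dots> = (\<Sum>k\<le>M. \<Sum>m<n. t ^ k * (kd m l * Qk n W k $$ (i,m)) + t ^ Suc k * (Qk n W k $$ (i,m) * L $$ (m,l)))"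
      by (rule sum.swap)
    also have "\<dots> = (\<Sum>k\<le>M. t ^ k * Qk n W k $$ (i,l) + t ^ Suc k * QL k)"
      by (rule sum.cong[OF refl], simp add: sum.distrib sum_distrib_left[symmetric] QL_def l)
    finally have E2: "(adj_mat A * A) $$ (i,l) = (\<Sum>k\<le>M. t ^ k * Qk n W k $$ (i,l) + t ^ Suc k * QL k)" .
    have s1: "(\<Sum>k\<le>Suc M. Qk n W k $$ (i,l) * t ^ k) = (\<Sum>k\<le>M. t ^ k * Qk n W k $$ (i,l))"
      using Qk_zero[of n W "Suc M" i l] i l unfolding M_def N_def by (simp add: mult.commute)
    have s2: "(\<Sum>k\<le>Suc M. ql k * t ^ k) = (\<Sum>k\<le>M. t ^ Suc k * QL k)"
      unfolding sum.atMost_Suc_shift by (simp add: ql_def mult.commute)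
    have s3: "(\<Sum>k\<le>Suc M. sigma n W k * kd i l * t ^ k) = (\<Sum>k\<le>M. sigma n W k * t ^ k) * kd i l"
      using sigma_zero[of n W "Suc M"] unfolding M_def N_def by (simp add: sum_distrib_right sum_distrib_left algebra_simps)
    have "(\<Sum>k\<le>Suc M. c k * t ^ k) = (\<Sum>k\<le>Suc M. Qk n W k $$ (i,l) * t ^ k) + (\<Sum>k\<le>Suc M. ql k * t ^ k) - (\<Sum>k\<le>Suc M. sigma n W k * kd i l * t ^ k)"
      unfolding c_def by (simp add: algebra_simps sum.distrib sum_subtractf)
    also have "\<dots> = 0" unfolding s1 s2 s3 using E1 E2 by (simp add: sum.distrib)
    finally show "(\<Sum>k\<le>Suc M. c k * t ^ k) = 0" .
  qed
  hence "\<forall>k\<le>Suc M. c k = 0" using polyfun_eq_0 by blast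
  thus ?thesis unfolding c_def ql_def QL_def M_def N_def L_def .
qed




lemma Pent:
  fixes L :: "real mat"
  assumes cL: "L \<in> carrier_mat n n" and i: "i < n" and l: "l < n"
  shows "((- L) ^\<^sub>m Suc j) $$ (i,l) = - (\<Sum>m<n. ((- L) ^\<^sub>m j) $$ (i,m) * L $$ (m,l))"
proof -
  have c2: "(- L) ^\<^sub>m j \<in> carrier_mat n n" using cL unfolding carrier_mat_def by auto
  have d: "dim_row L = n" "dim_col L = n" using cL by auto
  have "((- L) ^\<^sub>m Suc j) $$ (i,l) = (\<Sum>m<n. ((- L) ^\<^sub>m j) $$ (i,m) * (- L) $$ (m,l))"
    using mult_entry[OF c2 _ i l, of "- L"] cL by simp
  also have "\<dots> = - (\<Sum>m<n. ((- L) ^\<^sub>m j) $$ (i,m) * L $$ (m,l))"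
    using d l by (simp add: sum_negf[symmetric])
  finally show ?thesis .
qed

lemma P0ent:
  fixes L :: "real mat"
  assumes cL: "L \<in> carrier_mat n n" and i: "i < n" and l: "l < n"
  shows "((- L) ^\<^sub>m 0) $$ (i,l) = kd i l"
  using assms by (simp add: kd_def)

lemma Qk_formula:
  assumes diag: "\<forall>i<n. W $$ (i,i) = 0"
  shows "k \<le> n - forest_dim n W \<Longrightarrow> \<forall>i<n. \<forall>l<n. Qk n W k $$ (i,l) = (\<Sum>j\<le>k. sigma n W (k-j) * ((- laplacian n W) ^\<^sub>m j) $$ (i,l))"
proof (induction k)
  case 0
  show ?case
  proof (intro allI impI)
    fix i l assume i: "i < n" and l: "l < n"
    have "Qk n W 0 $$ (i,l) - sigma n W 0 * kd i l = 0" using coeff_ids[OF diag i l] by auto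
    thus "Qk n W 0 $$ (i,l) = (\<Sum>j\<le>0. sigma n W (0-j) * ((- laplacian n W) ^\<^sub>m j) $$ (i,l))"
      using P0ent[OF lap_carrier i l] by simp
  qed
next
  case (Suc k)
  hence IH: "\<forall>i<n. \<forall>l<n. Qk n W k $$ (i,l) = (\<Sum>j\<le>k. sigma n W (k-j) * ((- laplacian n W) ^\<^sub>m j) $$ (i,l))" by simp
  show ?case
  proof (intro allI impI)
    fix i l assume i: "i < n" and l: "l < n"
    let ?L = "laplacian n W"
    let ?P = "\<lambda>j. (- ?L) ^\<^sub>m j"
    have "Suc k \<le> Suc (Suc (n - forest_dim n W))" using Suc.prems by simp
    hence C: "Qk n W (Suc k) $$ (i,l) + (\<Sum>m<n. Qk n W k $$ (i,m) * ?L $$ (m,l)) - sigma n W (Suc k) * kd i l = 0"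
      using coeff_ids[OF diag i l] by fastforce
    have "(\<Sum>m<n. Qk n W k $$ (i,m) * ?L $$ (m,l)) = (\<Sum>m<n. \<Sum>j\<le>k. sigma n W (k-j) * (?P j $$ (i,m) * ?L $$ (m,l)))"
      by (rule sum.cong[OF refl], simp add: IH i sum_distrib_right mult.assoc)
    also have "\<dots> = (\<Sum>j\<le>k. sigma n W (k-j) * (\<Sum>m<n. ?P j $$ (i,m) * ?L $$ (m,l)))"
      by (subst sum.swap, simp add: sum_distrib_left)
    also have "\<dots> = - (\<Sum>j\<le>k. sigma n W (k-j) * ?P (Suc j) $$ (i,l))"
      unfolding Pent[OF lap_carrier i l] by (simp add: sum_negf)
    finally have QL: "(\<Sum>m<n. Qk n W k $$ (i,m) * ?L $$ (m,l)) = - (\<Sum>j\<le>k. sigma n W (k-j) * ?P (Suc j) $$ (i,l))" .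
    have "(\<Sum>j\<le>Suc k. sigma n W (Suc k - j) * ?P j $$ (i,l)) = sigma n W (Suc k) * kd i l + (\<Sum>j\<le>k. sigma n W (k-j) * ?P (Suc j) $$ (i,l))"
      unfolding sum.atMost_Suc_shift using P0ent[OF lap_carrier i l] by simp
    thus "Qk n W (Suc k) $$ (i,l) = (\<Sum>j\<le>Suc k. sigma n W (Suc k - j) * ?P j $$ (i,l))"
      using C QL by simp
  qed
qed




lemma mat_sum_ent: "i < n \<Longrightarrow> l < n \<Longrightarrow> mat_sum n f K $$ (i,l) = (\<Sum>k\<in>K. f k $$ (i,l))"
  unfolding mat_sum_def by simp

lemma Qk_carrier: "Qk n W k \<in> carrier_mat n n" unfolding Qk_def by simp
lemma Qk_dims[simp]: "dim_row (Qk n W k) = n" "dim_col (Qk n W k) = n" unfolding Qk_def by simp_all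

lemma Qtau_adj:
  assumes diag: "\<forall>i<n. W $$ (i,i) = 0"
  shows "Qtau n W t = adj_mat (1\<^sub>m n + t \<cdot>\<^sub>m laplacian n W)"
proof (rule eq_matI)
  have cA: "1\<^sub>m n + t \<cdot>\<^sub>m laplacian n W \<in> carrier_mat n n" using lap_carrier by simp
  show "dim_row (Qtau n W t) = dim_row (adj_mat (1\<^sub>m n + t \<cdot>\<^sub>m laplacian n W))"
    "dim_col (Qtau n W t) = dim_col (adj_mat (1\<^sub>m n + t \<cdot>\<^sub>m laplacian n W))"
    using adj_mat(1)[OF cA] unfolding Qtau_def mat_sum_def by auto
  fix i l assume "i < dim_row (adj_mat (1\<^sub>m n + t \<cdot>\<^sub>m laplacian n W))" "l < dim_col (adj_mat (1\<^sub>m n + t \<cdot>\<^sub>m laplacian n W))"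
  hence i: "i < n" and l: "l < n" using adj_mat(1)[OF cA] by auto
  have "Qtau n W t $$ (i,l) = (\<Sum>k\<in>{0..n - forest_dim n W}. t ^ k * Qk n W k $$ (i,l))"
    unfolding Qtau_def mat_sum_ent[OF i l] using i l Qk_carrier[of n W] by (intro sum.cong refl, auto)
  also have "\<dots> = adj_mat (1\<^sub>m n + t \<cdot>\<^sub>m laplacian n W) $$ (i,l)"
    using adj_poly[OF diag order.refl i l] by (simp add: atLeast0AtMost)
  finally show "Qtau n W t $$ (i,l) = adj_mat (1\<^sub>m n + t \<cdot>\<^sub>m laplacian n W) $$ (i,l)" .
qed

lemma Qtau_poly:
  assumes diag: "\<forall>i<n. W $$ (i,i) = 0"
  shows "Qtau n W t = mat_sum n (\<lambda>k. s_tau n W (n - forest_dim n W - k) t \<cdot>\<^sub>m ((- (t \<cdot>\<^sub>m laplacian n W)) ^\<^sub>m k)) {0..n - forest_dim n W}"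
proof (rule eq_matI)
  define N where "N = n - forest_dim n W"
  let ?L = "laplacian n W"
  let ?P = "\<lambda>j. (- ?L) ^\<^sub>m j"
  show "dim_row (Qtau n W t) = dim_row (mat_sum n (\<lambda>k. s_tau n W (n - forest_dim n W - k) t \<cdot>\<^sub>m ((- (t \<cdot>\<^sub>m ?L)) ^\<^sub>m k)) {0..n - forest_dim n W})"
    "dim_col (Qtau n W t) = dim_col (mat_sum n (\<lambda>k. s_tau n W (n - forest_dim n W - k) t \<cdot>\<^sub>m ((- (t \<cdot>\<^sub>m ?L)) ^\<^sub>m k)) {0..n - forest_dim n W})"
    unfolding Qtau_def mat_sum_def by auto
  fix i l assume "i < dim_row (mat_sum n (\<lambda>k. s_tau n W (n - forest_dim n W - k) t \<cdot>\<^sub>m ((- (t \<cdot>\<^sub>m ?L)) ^\<^sub>m k)) {0..n - forest_dim n W})"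
    "l < dim_col (mat_sum n (\<lambda>k. s_tau n W (n - forest_dim n W - k) t \<cdot>\<^sub>m ((- (t \<cdot>\<^sub>m ?L)) ^\<^sub>m k)) {0..n - forest_dim n W})"
  hence i: "i < n" and l: "l < n" unfolding mat_sum_def by auto
  have dL: "dim_row ?L = n" "dim_col ?L = n" using lap_carrier[of n W] by auto
  define g where "g j m = sigma n W m * t ^ (j + m) * ?P j $$ (i,l)" for j m
  have "Qtau n W t $$ (i,l) = (\<Sum>k\<le>N. t ^ k * Qk n W k $$ (i,l))"
    unfolding Qtau_def mat_sum_ent[OF i l] N_def atLeast0AtMost[symmetric] using i l Qk_carrier[of n W] by (intro sum.cong refl, auto)
  also have "\<dots> = (\<Sum>k\<le>N. \<Sum>j\<le>k. g j (k - j))"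
  proof (rule sum.cong[OF refl])
    fix k assume "k \<in> {..N}"
    hence k: "k \<le> N" by simp
    have "Qk n W k $$ (i,l) = (\<Sum>j\<le>k. sigma n W (k-j) * ?P j $$ (i,l))"
      using Qk_formula[OF diag] k i l unfolding N_def by blast
    thus "t ^ k * Qk n W k $$ (i,l) = (\<Sum>j\<le>k. g j (k - j))"
      unfolding g_def by (simp add: sum_distrib_left algebra_simps)
  qed
  also have "\<dots> = (\<Sum>(j,m)\<in>{(j,m). j + m \<le> N}. g j m)"
    by (rule sum.triangle_reindex_eq[symmetric])
  also have "{(j,m). j + m \<le> N} = (SIGMA j:{..N}. {..N - j})" by auto
  also have "(\<Sum>(j,m)\<in>(SIGMA j:{..N}. {..N - j}). g j m) = (\<Sum>j\<le>N. \<Sum>m\<le>N - j. g j m)"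
    by (rule sum.Sigma[symmetric], auto)
  also have "\<dots> = (\<Sum>j\<le>N. s_tau n W (N - j) t * ((- (t \<cdot>\<^sub>m ?L)) ^\<^sub>m j) $$ (i,l))"
  proof (rule sum.cong[OF refl])
    fix j
    have "((- (t \<cdot>\<^sub>m ?L)) ^\<^sub>m j) $$ (i,l) = t ^ j * ?P j $$ (i,l)"
      using pow_scale[OF lap_carrier, where t=t and k=j] i l by blast
    thus "(\<Sum>m\<le>N - j. g j m) = s_tau n W (N - j) t * ((- (t \<cdot>\<^sub>m ?L)) ^\<^sub>m j) $$ (i,l)"
      unfolding g_def s_tau_def atLeast0AtMost by (simp add: sum_distrib_right sum_distrib_left power_add algebra_simps)
  qed
  also have "\<dots> = mat_sum n (\<lambda>k. s_tau n W (n - forest_dim n W - k) t \<cdot>\<^sub>m ((- (t \<cdot>\<^sub>m ?L)) ^\<^sub>m k)) {0..n - forest_dim n W} $$ (i,l)"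
    unfolding mat_sum_ent[OF i l] N_def atLeast0AtMost[symmetric] using i l dL by (intro sum.cong refl, auto)
  finally show "Qtau n W t $$ (i,l) = mat_sum n (\<lambda>k. s_tau n W (n - forest_dim n W - k) t \<cdot>\<^sub>m ((- (t \<cdot>\<^sub>m ?L)) ^\<^sub>m k)) {0..n - forest_dim n W} $$ (i,l)" .
qed




theorem proposition7:
  fixes n :: nat and W :: "real mat"
  assumes "n > 1"
    and "W \<in> carrier_mat n n"
    and "\<forall>i<n. W $$ (i,i) = 0"
    and "\<forall>i<n. \<forall>j<n. W $$ (i,j) \<ge> 0"
  defines "L \<equiv> laplacian n W" and "d \<equiv> forest_dim n W"
  shows "Qtot n W = mat_sum n (\<lambda>k. s_sum n W (n - d - k) \<cdot>\<^sub>m ((- L) ^\<^sub>m k)) {0..n - d}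
       \<and> Qtot n W = adj_mat (1\<^sub>m n + L)
       \<and> (\<forall>\<tau>::real.
            Qtau n W \<tau> = mat_sum n (\<lambda>k. s_tau n W (n - d - k) \<tau> \<cdot>\<^sub>m ((- (\<tau> \<cdot>\<^sub>m L)) ^\<^sub>m k)) {0..n - d}
          \<and> Qtau n W \<tau> = adj_mat (1\<^sub>m n + \<tau> \<cdot>\<^sub>m L))"
proof -
  have diag: "\<forall>i<n. W $$ (i,i) = 0" using assms(3) .
  have T: "\<forall>\<tau>::real.
            Qtau n W \<tau> = mat_sum n (\<lambda>k. s_tau n W (n - d - k) \<tau> \<cdot>\<^sub>m ((- (\<tau> \<cdot>\<^sub>m L)) ^\<^sub>m k)) {0..n - d}
          \<and> Qtau n W \<tau> = adj_mat (1\<^sub>m n + \<tau> \<cdot>\<^sub>m L)"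
    unfolding L_def d_def using Qtau_poly[OF diag] Qtau_adj[OF diag] by blast
  have cL: "L \<in> carrier_mat n n" unfolding L_def by (rule lap_carrier)
  have oneL: "1 \<cdot>\<^sub>m L = L" using cL by (intro eq_matI, auto)
  have Q1: "Qtot n W = Qtau n W 1"
    unfolding Qtot_def Qtau_def mat_sum_def by (intro eq_matI, auto intro!: sum.cong)
  have S1: "\<And>k. s_tau n W k 1 = s_sum n W k" unfolding s_tau_def s_sum_def by simp
  have "Qtot n W = mat_sum n (\<lambda>k. s_sum n W (n - d - k) \<cdot>\<^sub>m ((- L) ^\<^sub>m k)) {0..n - d}"
    using T[rule_format, of 1] unfolding Q1 oneL S1 by simp
  moreover have "Qtot n W = adj_mat (1\<^sub>m n + L)"
    using T[rule_format, of 1] unfolding Q1 oneL by blast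
  ultimately show ?thesis using T by blast
qed


end
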